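(* Consider the Public WOM model described in the context with $k_{f\max}<\infty$, and suppose that in the original network the seller's optimal cutoff $\underline{k}^*$ satisfies $\Gamma(L(\underline{k}^* ))=1-\delta$ with $\delta<\dfrac{2c}{\underline{k}^*\,\phi(L(\underline{k}^* ),1/2)}$. Then there exist distributions $f'$ and $g'$ first-order stochastically dominating $f$ and $g$ respectively, and satisfying $(1-\beta)\sum_k kf'(k)=\beta\sum_k kg'(k)$, such that the seller's maximal profit in the denser network $(f',g')$ is higher than in the original network, while the fraction of uninformed consumers receiving the information at the seller's optimum in the denser network is strictly lower than $1-\delta$.
   Context: A seller (zero marginal cost) faces a unit mass of unit-demand consumers: a fraction $1-\beta\in(0,1)$ informed with reservation value 1 (charged $p_1=1$), and a fraction $\beta$ uninformed with reservation value $v\sim U[0,1]$ (charged $p_2$). Informed consumers are linked to uninformed ones by a directed bipartite network with out-degree distribution $f$ (informed) and in-degree distribution $g$ (uninformed) on the positive integers, with $(1-\beta)\sum_k kf(k)=\beta\sum_k kg(k)$; $k_{f\max}$ is the largest degree in the support of $f$. With a fraction $L$ of active links, $\Gamma(L)=1-\sum_k g(k)(1-L)^k$ and $\phi(L,p_2)=(1-p_2)\sum_k g(k)\frac{1-(1-L)^k}{kL}$. Public WOM: an informed consumer of out-degree $k$ informs all out-neighbours at lump-sum cost $c>0$ iff $kb\phi(L,p_2)\ge c$, where $b$ is the per-referral bonus; a cutoff $\underline{k}$ gives $L(\underline{k})=\sum_{k\ge\underline{k}}f(k)$ and is implemented by $b=c/(\underline{k}\phi(L(\underline{k}),p_2))$.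 The seller chooses $(p_2,\underline{k})$ to maximize $(1-\beta)+\beta\left(p_2-\frac{c}{\underline{k}\phi(L(\underline{k}),p_2)}\right)(1-p_2)\Gamma(L(\underline{k}))$ (the optimal price is $p_2=1/2$). A distribution $f'$ first-order stochastically dominates $f$ if $\sum_{k\ge\hat{k}}f'(k)\ge\sum_{k\ge\hat{k}}f(k)$ for all $\hat{k}$; in the denser network all quantities are computed with $f',g'$. *)

theory Defs
  imports Complex_Main
begin

definition degree_dist :: "(nat \<Rightarrow> real) \<Rightarrow> bool" where
  "degree_dist h \<longleftrightarrow> (\<forall>k. 0 \<le> h k) \<and> h 0 = 0 \<and> summable h \<and> suminf h = 1
     \<and> summable (\<lambda>k. real k * h k)"

definition mean_deg :: "(nat \<Rightarrow> real) \<Rightarrow> real" where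
  "mean_deg h = (\<Sum>k. real k * h k)"

definition tail :: "(nat \<Rightarrow> real) \<Rightarrow> nat \<Rightarrow> real" where
  "tail h kh = (\<Sum>k. if kh \<le> k then h k else 0)"

definition fosd :: "(nat \<Rightarrow> real) \<Rightarrow> (nat \<Rightarrow> real) \<Rightarrow> bool" where
  "fosd f' f \<longleftrightarrow> (\<forall>kh. tail f' kh \<ge> tail f kh)"

text \<open>Fraction of active links for cutoff kc: L(kc) = sum_{k >= kc} f(k).\<close>
definition Lcut :: "(nat \<Rightarrow> real) \<Rightarrow> nat \<Rightarrow> real" where
  "Lcut f kc = tail f kc"

definition Gamma :: "(nat \<Rightarrow> real) \<Rightarrow> real \<Rightarrow> real" where
  "Gamma g L = 1 - (\<Sum>k. g k * (1 - L) ^ k)"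

definition phi :: "(nat \<Rightarrow> real) \<Rightarrow> real \<Rightarrow> real \<Rightarrow> real" where
  "phi g L p = (1 - p) * (\<Sum>k. g k * (1 - (1 - L) ^ k) / (real k * L))"

text \<open>Seller's profit with price p for uninformed and cutoff kc.\<close>
definition profit :: "real \<Rightarrow> real \<Rightarrow> (nat \<Rightarrow> real) \<Rightarrow> (nat \<Rightarrow> real) \<Rightarrow> real \<Rightarrow> nat \<Rightarrow> real" where
  "profit \<beta> c f g p kc = (1 - \<beta>) + \<beta> * (p - c / (real kc * phi g (Lcut f kc) p)) * (1 - p)
      * Gamma g (Lcut f kc)"

definition is_optimum :: "real \<Rightarrow> real \<Rightarrow> (nat \<Rightarrow> real) \<Rightarrow> (nat \<Rightarrow> real) \<Rightarrow> real \<Rightarrow> nat \<Rightarrow> bool" where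
  "is_optimum \<beta> c f g p kc \<longleftrightarrow> 0 < p \<and> p < 1 \<and> 1 \<le> kc \<and>
     (\<forall>p' kc'. 0 < p' \<and> p' < 1 \<and> 1 \<le> kc' \<longrightarrow> profit \<beta> c f g p' kc' \<le> profit \<beta> c f g p kc)"

end

theory Submission
  imports Defs
begin

definition sh :: "nat \<Rightarrow> (nat \<Rightarrow> real) \<Rightarrow> nat \<Rightarrow> real" where
  "sh s a k = (if s \<le> k then a (k - s) else 0)"

lemma sh_sums:
  assumes "(\<lambda>i. a i * h (i + s)) sums S"
  shows "(\<lambda>k. sh s a k * h k) sums S"
proof -
  have "(\<lambda>k. sh s a (k + s) * h (k + s)) = (\<lambda>i. a i * h (i + s))" by (simp add: sh_def)
  hence "(\<lambda>k. sh s a (k+s) * h (k+s)) sums S" using assms by simp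
  thus ?thesis by (subst sums_zero_iff_shift[symmetric, of s]) (auto simp: sh_def)
qed

definition gm :: "real \<Rightarrow> nat \<Rightarrow> nat \<Rightarrow> (nat \<Rightarrow> real) \<Rightarrow> nat \<Rightarrow> real" where
  "gm w s M g k = (1 - w) * sh s g k + w * sh M g k"

lemma gm_sums:
  assumes "(\<lambda>i. g i * h (i+s)) sums S1" "(\<lambda>i. g i * h (i+M)) sums S2"
  shows "(\<lambda>k. gm w s M g k * h k) sums ((1-w)*S1 + w*S2)"
proof -
  have "(\<lambda>k. (1-w) * (sh s g k * h k) + w * (sh M g k * h k)) sums ((1-w)*S1 + w*S2)"
    by (intro sums_add sums_mult sh_sums assms)
  thus ?thesis by (simp add: gm_def algebra_simps)
qed

definition fp :: "nat \<Rightarrow> nat \<Rightarrow> real \<Rightarrow> nat \<Rightarrow> real" where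
  "fp K K2 e k = (1 - e) * (if k = K then 1 else 0) + e * (if k = K2 then 1 else 0)"

lemma fp_sums: "(\<lambda>k. fp K K2 e k * h k) sums ((1-e) * h K + e * h K2)"
proof -
  have "(\<lambda>k. (1-e) * (if k = K then h k else 0) + e * (if k = K2 then h k else 0)) sums ((1-e) * h K + e * h K2)"
    by (intro sums_add sums_mult sums_single)
  moreover have "(\<lambda>k. fp K K2 e k * h k) = (\<lambda>k. (1-e) * (if k = K then h k else 0) + e * (if k = K2 then h k else 0))"
    by (auto simp: fp_def fun_eq_iff algebra_simps)
  ultimately show ?thesis by simp
qed

lemma dd_basic:
  assumes "degree_dist g"
  shows "\<And>k. 0 \<le> g k" "g 0 = 0" "g sums 1" "(\<lambda>k. real k * g k) sums mean_deg g" "mean_deg g \<ge> 0"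
  using assms unfolding degree_dist_def mean_deg_def
  by (auto simp: sums_iff intro!: suminf_nonneg)

lemma dd_pow_sums:
  assumes "degree_dist g" "0 \<le> x" "x \<le> 1"
  shows "summable (\<lambda>k. g k * x ^ k)" "(\<Sum>k. g k * x ^ k) \<le> 1" "0 \<le> (\<Sum>k. g k * x ^ k)"
proof -
  note d = dd_basic[OF assms(1)]
  show s: "summable (\<lambda>k. g k * x ^ k)"
    by (rule summable_comparison_test'[of g 0]) (use d assms in \<open>auto simp: sums_iff abs_mult intro!: mult_left_le power_le_one\<close>)
  have "(\<Sum>k. g k * x ^ k) \<le> (\<Sum>k. g k)"
    by (rule suminf_le) (use d assms s in \<open>auto simp: sums_iff intro!: mult_left_le power_le_one\<close>)
  thus "(\<Sum>k. g k * x ^ k) \<le> 1" using d by (simp add: sums_iff)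
  show "0 \<le> (\<Sum>k. g k * x ^ k)" using s d assms by (auto intro!: suminf_nonneg)
qed

lemma tail_bounds:
  assumes "degree_dist g"
  shows "summable (\<lambda>k. if kh \<le> k then g k else 0)" "0 \<le> tail g kh" "tail g kh \<le> 1"
proof -
  note d = dd_basic[OF assms(1)]
  show s: "summable (\<lambda>k. if kh \<le> k then g k else 0)"
    by (rule summable_comparison_test'[of g 0]) (use d in \<open>auto simp: sums_iff\<close>)
  have "tail g kh \<le> (\<Sum>k. g k)" unfolding tail_def
    by (rule suminf_le) (use d s in \<open>auto simp: sums_iff\<close>)
  thus "tail g kh \<le> 1" using d by (simp add: sums_iff)
  show "0 \<le> tail g kh" unfolding tail_def using s d by (auto intro!: suminf_nonneg)
qed

lemma bern1: fixes e :: real assumes "0 \<le> e" "e \<le> 1" shows "1 - real k * e \<le> (1 - e) ^ k"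
  using Bernoulli_inequality[of "-e" k] assms by simp

lemma bern2: fixes e :: real assumes "0 \<le> e" "e \<le> 1" shows "(1 - e) ^ M * (1 + real M * e) \<le> 1"
proof -
  have "(1 - e) ^ M * (1 + real M * e) \<le> (1 - e) ^ M * (1 + e) ^ M"
    using Bernoulli_inequality[of e M] assms by (intro mult_left_mono) auto
  also have "\<dots> = (1 - e*e) ^ M" by (simp add: power_mult_distrib[symmetric] algebra_simps)
  also have "\<dots> \<le> 1" using assms by (intro power_le_one) (auto simp: mult_le_one)
  finally show ?thesis .
qed

lemma bern3: fixes e :: real assumes "0 \<le> e" "e \<le> 1" shows "real k * e * (1 - e) ^ k \<le> 1 - (1 - e) ^ k"
proof -
  have "(\<Sum>i<k. (1-e) ^ k) \<le> (\<Sum>i<k. (1-e) ^ i)"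
    using assms by (intro sum_mono power_decreasing) auto
  hence "real k * (1-e)^k \<le> (\<Sum>i<k. (1-e) ^ i)" by simp
  hence "e * (real k * (1-e)^k) \<le> e * (\<Sum>i<k. (1-e) ^ i)" using assms by (intro mult_left_mono) auto
  also have "\<dots> = 1 - (1 - e) ^ k" using one_diff_power_eq[of "1-e" k] by simp
  finally show ?thesis by (simp add: algebra_simps)
qed

lemma gm_props:
  assumes g: "degree_dist g" and w: "0 \<le> w" "w \<le> 1" and sM: "s \<le> M"
  shows "degree_dist (gm w s M g)" "mean_deg (gm w s M g) = mean_deg g + (1-w)*s + w*M"
    "\<And>x. 0 \<le> x \<Longrightarrow> x \<le> 1 \<Longrightarrow> (\<lambda>k. gm w s M g k * x^k) sums ((1-w) * x^s * (\<Sum>i. g i * x^i) + w * x^M * (\<Sum>i. g i * x^i))"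
    "\<And>kh. tail g kh \<le> tail (gm w s M g) kh"
    "\<And>k. k \<le> s \<Longrightarrow> gm w s M g k = 0"
    "\<And>k. 0 \<le> gm w s M g k"
proof -
  note d = dd_basic[OF g]
  show nn: "\<And>k. 0 \<le> gm w s M g k" using d w by (auto simp: gm_def sh_def)
  show z: "\<And>k. k \<le> s \<Longrightarrow> gm w s M g k = 0" using d sM by (auto simp: gm_def sh_def le_Suc_eq)
  have s1: "(\<lambda>k. gm w s M g k * 1) sums ((1-w)*1 + w*1)"
    by (rule gm_sums) (use d in auto)
  have s2: "(\<lambda>k. gm w s M g k * real k) sums ((1-w)*(mean_deg g + s) + w*(mean_deg g + M))"
  proof (rule gm_sums)
    have c: "(\<lambda>n. real a * g n) sums (real a * 1)" for a using sums_mult[OF d(3)] .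
    show "(\<lambda>i. g i * real (i + s)) sums (mean_deg g + real s)"
      using sums_add[OF d(4) c[of s]] by (simp add: algebra_simps)
    show "(\<lambda>i. g i * real (i + M)) sums (mean_deg g + real M)"
      using sums_add[OF d(4) c[of M]] by (simp add: algebra_simps)
  qed
  show "degree_dist (gm w s M g)" unfolding degree_dist_def
    using nn z[of 0] s1 s2 by (auto simp: sums_iff mult.commute)
  show "mean_deg (gm w s M g) = mean_deg g + (1-w)*s + w*M"
    using s2 unfolding mean_deg_def by (auto simp: sums_iff mult.commute algebra_simps)
  show "(\<lambda>k. gm w s M g k * x^k) sums ((1-w) * x^s * (\<Sum>i. g i * x^i) + w * x^M * (\<Sum>i. g i * x^i))"
    if x: "0 \<le> x" "x \<le> 1" for x
  proof -
    have G: "(\<lambda>i. g i * x^i) sums (\<Sum>i. g i * x^i)" using dd_pow_sums[OF g x] by (simp add: sums_iff)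
    have "(\<lambda>k. gm w s M g k * x^k) sums ((1-w) * ((\<Sum>i. g i * x^i) * x^s) + w * ((\<Sum>i. g i * x^i) * x^M))"
      by (rule gm_sums) (use sums_mult2[OF G] in \<open>auto simp: power_add mult.assoc\<close>)
    thus ?thesis by (simp add: algebra_simps)
  qed
  show "tail g kh \<le> tail (gm w s M g) kh" for kh
  proof -
    define ind where "ind = (\<lambda>k::nat. if kh \<le> k then (1::real) else 0)"
    have T: "\<And>h. tail h kh = (\<Sum>k. h k * ind k)" unfolding tail_def ind_def
      by (intro arg_cong[where f=suminf]) auto
    have sa: "summable (\<lambda>i. g i * ind (i + a))" for a
      by (rule summable_comparison_test'[of g 0]) (use d in \<open>auto simp: sums_iff ind_def\<close>)
    have le: "(\<Sum>i. g i * ind i) \<le> (\<Sum>i. g i * ind (i + a))" for a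
      by (rule suminf_le) (use d sa[of 0] sa[of a] in \<open>auto simp: ind_def\<close>)
    have "(\<lambda>k. gm w s M g k * ind k) sums ((1-w) * (\<Sum>i. g i * ind (i + s)) + w * (\<Sum>i. g i * ind (i + M)))"
      by (rule gm_sums) (use sa in \<open>auto simp: summable_sums\<close>)
    hence "tail (gm w s M g) kh = (1-w) * (\<Sum>i. g i * ind (i + s)) + w * (\<Sum>i. g i * ind (i + M))"
      by (simp add: T sums_iff)
    also have "\<dots> \<ge> (1-w) * (\<Sum>i. g i * ind i) + w * (\<Sum>i. g i * ind i)"
      using le[of s] le[of M] w by (intro add_mono mult_left_mono) auto
    finally show ?thesis by (simp add: T algebra_simps)
  qed
qed

lemma profit_eq:
  assumes "0 < p" "p < 1"
  shows "profit \<beta> c f g p kc = 1 - \<beta> + \<beta> * Gamma g (Lcut f kc) *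
     (p * (1 - p) - c / (real kc * (\<Sum>k. g k * (1 - (1 - Lcut f kc) ^ k) / (real k * Lcut f kc))))"
proof -
  define S where "S = (\<Sum>k. g k * (1 - (1 - Lcut f kc) ^ k) / (real k * Lcut f kc))"
  have "(p - c / (real kc * ((1 - p) * S))) * (1 - p) = p * (1 - p) - c / (real kc * S)"
  proof (cases "real kc * S = 0")
    case True thus ?thesis by auto
  next
    case False thus ?thesis using assms by (auto simp: field_simps)
  qed
  thus ?thesis unfolding profit_def phi_def S_def[symmetric] by (simp add: algebra_simps)
qed

lemma fp_props:
  assumes K: "1 \<le> K" "K < K2" and e: "0 < e" "e < 1"
  shows "degree_dist (fp K K2 e)" "mean_deg (fp K K2 e) = (1-e) * K + e * K2"
    "\<And>kc. tail (fp K K2 e) kc = (if kc \<le> K then 1 - e else 0) + (if kc \<le> K2 then e else 0)"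
proof -
  have s1: "(\<lambda>k. fp K K2 e k * 1) sums ((1-e)*1 + e*1)" by (rule fp_sums)
  have s2: "(\<lambda>k. fp K K2 e k * real k) sums ((1-e)*K + e*K2)" by (rule fp_sums)
  show "degree_dist (fp K K2 e)" unfolding degree_dist_def
    using s1 s2 K e by (auto simp: sums_iff mult.commute) (auto simp: fp_def)
  show "mean_deg (fp K K2 e) = (1-e) * K + e * K2"
    using s2 unfolding mean_deg_def by (auto simp: sums_iff mult.commute)
  show "tail (fp K K2 e) kc = (if kc \<le> K then 1 - e else 0) + (if kc \<le> K2 then e else 0)" for kc
  proof -
    have "(\<lambda>k. fp K K2 e k * (if kc \<le> k then 1 else 0)) sums ((1-e) * (if kc \<le> K then 1 else 0) + e * (if kc \<le> K2 then 1 else 0))"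
      by (rule fp_sums)
    moreover have "(\<lambda>k. fp K K2 e k * (if kc \<le> k then 1 else 0)) = (\<lambda>k. if kc \<le> k then fp K K2 e k else 0)"
      by auto
    ultimately show ?thesis unfolding tail_def by (auto simp: sums_iff)
  qed
qed

lemma fosd_fp:
  assumes f: "degree_dist f" and fK: "\<And>k. K < k \<Longrightarrow> f k = 0"
    and K: "1 \<le> K" "K < K2" and e: "0 < e" "e < 1"
  shows "fosd (fp K K2 e) f"
  unfolding fosd_def
proof
  fix kh
  show "tail f kh \<le> tail (fp K K2 e) kh"
  proof (cases "kh \<le> K")
    case True thus ?thesis using tail_bounds[OF f, of kh] fp_props(3)[OF K e, of kh] K by auto
  next
    case False
    hence "(\<lambda>k. if kh \<le> k then f k else 0) = (\<lambda>k. 0)" using fK by (auto simp: fun_eq_iff)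
    hence "tail f kh = 0" unfolding tail_def by simp
    thus ?thesis using fp_props(3)[OF K e, of kh] e by auto
  qed
qed

lemma pq_le: fixes p :: real shows "p * (1 - p) \<le> 1/4"
proof -
  have "0 \<le> (p - 1/2) * (p - 1/2)" by simp
  thus ?thesis by (simp add: algebra_simps)
qed

lemma regime1:
  assumes g: "degree_dist g" and gz: "\<And>k. k \<le> s \<Longrightarrow> g k = 0"
    and Ks: "real K < 4 * c * (real s + 1)" and kc: "1 \<le> kc" "kc \<le> K"
    and L: "Lcut f kc = 1" and p: "0 < p" "p < 1" and b: "0 < \<beta>" and c: "0 < c"
  shows "profit \<beta> c f g p kc < 1 - \<beta>"
proof -
  note d = dd_basic[OF g]
  have "(\<lambda>k. g k * 0 ^ k) = (\<lambda>k. if k = 0 then g k else 0)" by (auto simp: fun_eq_iff)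
  hence "(\<lambda>k. g k * 0 ^ k) sums g 0" using sums_single[of 0 g] by simp
  hence G: "Gamma g 1 = 1" using d by (simp add: Gamma_def sums_iff)
  define H where "H = (\<Sum>k. g k * (1 - 0 ^ k) / (real k * 1))"
  have sH: "summable (\<lambda>k. g k * (1 - 0 ^ k) / (real k * 1))"
  proof (rule summable_comparison_test'[of g 1])
    show "summable g" using d by (simp add: sums_iff)
    fix n :: nat assume "1 \<le> n"
    then obtain j where "n = Suc j" by (cases n) auto
    thus "norm (g n * (1 - 0 ^ n) / (real n * 1)) \<le> g n" using d(1)[of n]
      by (auto simp: divide_le_eq intro!: mult_le_cancel_left1[THEN iffD2])
  qed
  have "H \<le> (\<Sum>k. g k / (real s + 1))" unfolding H_def
  proof (rule suminf_le)
    fix k show "g k * (1 - 0 ^ k) / (real k * 1) \<le> g k / (real s + 1)"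
    proof (cases "k \<le> s")
      case True thus ?thesis using gz by simp
    next
      case False
      hence k: "real s + 1 \<le> real k" "k \<noteq> 0" by auto
      hence "g k / real k \<le> g k / (real s + 1)" using d(1)[of k] by (intro divide_left_mono) auto
      moreover have z: "(0::real) ^ k = 0" using k by simp
      ultimately show ?thesis unfolding z by simp
    qed
  qed (use sH d in \<open>auto simp: sums_iff intro!: summable_divide\<close>)
  also have "\<dots> = 1 / (real s + 1)" using d suminf_divide[of g "real s + 1"] by (simp add: sums_iff)
  finally have H1: "H \<le> 1 / (real s + 1)" .
  obtain k0 where k0: "g k0 \<noteq> 0"
  proof (cases "\<forall>k. g k = 0")
    case True
    hence "g = (\<lambda>k. 0)" by auto
    hence "g sums 0" by simp
    with d(3) have False using sums_unique2 by fastforce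
    thus ?thesis ..
  qed auto
  hence k0p: "0 < k0" using d by (cases k0) auto
  have gk0: "0 < g k0" using k0 d(1)[of k0] by simp
  have z0: "(0::real) ^ k0 = 0" using k0p by simp
  have H0: "0 < H" unfolding H_def
  proof (rule suminf_pos2[OF sH, of k0])
    show "0 < g k0 * (1 - 0 ^ k0) / (real k0 * 1)" unfolding z0 using gk0 k0p by simp
    fix n show "0 \<le> g n * (1 - 0 ^ n) / (real n * 1)" using d(1)[of n] by (cases n) auto
  qed
  have "real kc * H \<le> real K * (1 / (real s + 1))"
    using H1 H0 kc by (intro mult_mono) auto
  also have "\<dots> < 4 * c" using Ks by (simp add: field_simps)
  finally have "real kc * H < 4 * c" .
  hence "1/4 < c / (real kc * H)" using H0 kc by (simp add: field_simps)
  moreover have "p * (1 - p) \<le> 1/4" using pq_le[of p] .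
  ultimately have "p * (1 - p) - c / (real kc * H) < 0" by linarith
  hence "\<beta> * (p * (1 - p) - c / (real kc * H)) < 0" using b by (simp add: mult_pos_neg)
  moreover have "profit \<beta> c f g p kc = 1 - \<beta> + \<beta> * (p * (1 - p) - c / (real kc * H))"
    unfolding profit_eq[OF p] L G H_def by simp
  ultimately show ?thesis by simp
qed

lemma regime3:
  assumes g: "degree_dist g" and L: "Lcut f kc = 0" and p: "0 < p" "p < 1"
  shows "profit \<beta> c f g p kc = 1 - \<beta>"
proof -
  have "Gamma g 0 = 0" using dd_basic(3)[OF g] by (simp add: Gamma_def sums_iff)
  thus ?thesis unfolding profit_eq[OF p] L by simp
qed

definition Sf :: "(nat \<Rightarrow> real) \<Rightarrow> real \<Rightarrow> real" where
  "Sf g L = (\<Sum>k. g k * (1 - (1 - L) ^ k) / (real k * L))"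

lemma regime2:
  assumes L: "Lcut f kc = e" "Lcut f K2 = e" and kc: "1 \<le> kc" "kc \<le> K2" and p: "0 < p" "p < 1"
    and G: "0 < Gamma g e" and S: "0 < Sf g e" and b: "0 < \<beta>" and c: "0 < c"
  shows "profit \<beta> c f g p kc \<le> profit \<beta> c f g (1/2) K2"
    "profit \<beta> c f g (1/2) K2 = 1 - \<beta> + \<beta> * Gamma g e * (1/4 - c / (real K2 * Sf g e))"
proof -
  show eq: "profit \<beta> c f g (1/2) K2 = 1 - \<beta> + \<beta> * Gamma g e * (1/4 - c / (real K2 * Sf g e))"
  proof -
    have h: "0 < (1/2::real)" "(1/2::real) < 1" by auto
    show ?thesis unfolding profit_eq[OF h] L Sf_def by simp
  qed
  have "c / (real K2 * Sf g e) \<le> c / (real kc * Sf g e)"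
    using kc S c by (intro divide_left_mono mult_right_mono mult_pos_pos) auto
  hence "p * (1 - p) - c / (real kc * Sf g e) \<le> 1/4 - c / (real K2 * Sf g e)" using pq_le[of p] by linarith
  hence "\<beta> * Gamma g e * (p * (1 - p) - c / (real kc * Sf g e)) \<le> \<beta> * Gamma g e * (1/4 - c / (real K2 * Sf g e))"
    using b G by (intro mult_left_mono) auto
  thus "profit \<beta> c f g p kc \<le> profit \<beta> c f g (1/2) K2"
    unfolding eq unfolding profit_eq[OF p] L Sf_def by simp
qed

lemma Sf_lower:
  assumes g: "degree_dist g" and e: "0 < e" "e < 1"
  shows "(\<Sum>k. g k * (1 - e) ^ k) \<le> Sf g e"
proof -
  note d = dd_basic[OF g]
  have s1: "summable (\<lambda>k. g k * (1 - e) ^ k)" using dd_pow_sums[OF g, of "1-e"] e by auto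
  have s2: "summable (\<lambda>k. g k * (1 - (1 - e) ^ k) / (real k * e))"
  proof (rule summable_comparison_test'[of g 0])
    show "summable g" using d by (simp add: sums_iff)
    fix n :: nat
    have "1 - real n * e \<le> (1 - e) ^ n" using bern1[of e n] e by simp
    moreover have "(1 - e) ^ n \<le> 1" using e by (intro power_le_one) auto
    ultimately have "0 \<le> 1 - (1 - e) ^ n" "1 - (1 - e) ^ n \<le> real n * e" by auto
    hence "(1 - (1 - e) ^ n) / (real n * e) \<le> 1" "0 \<le> (1 - (1 - e) ^ n) / (real n * e)"
      using e by (auto simp: divide_le_eq_1)
    hence "g n * ((1 - (1 - e) ^ n) / (real n * e)) \<le> g n * 1" "0 \<le> g n * ((1 - (1 - e) ^ n) / (real n * e))"
      using d(1)[of n] by (intro mult_left_mono mult_nonneg_nonneg; simp)+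
    thus "norm (g n * (1 - (1 - e) ^ n) / (real n * e)) \<le> g n" by simp
  qed
  show ?thesis unfolding Sf_def
  proof (rule suminf_le[OF _ s1 s2])
    fix n :: nat
    show "g n * (1 - e) ^ n \<le> g n * (1 - (1 - e) ^ n) / (real n * e)"
    proof (cases n)
      case 0 thus ?thesis using d by simp
    next
      case (Suc j)
      hence "0 < real n * e" using e by simp
      moreover have "real n * e * (1 - e) ^ n \<le> 1 - (1 - e) ^ n" using bern3[of e n] e by simp
      ultimately have "(1 - e) ^ n \<le> (1 - (1 - e) ^ n) / (real n * e)" by (simp add: le_divide_eq mult.commute)
      thus ?thesis using d(1)[of n] by (simp add: mult_left_mono times_divide_eq_right[symmetric] del: times_divide_eq_right)
    qed
  qed
qed

theorem proposition4:
  fixes \<beta> c \<delta> :: real and f g :: "nat \<Rightarrow> real" and kstar :: nat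
  assumes beta: "0 < \<beta>" "\<beta> < 1"
    and cpos: "0 < c"
    and f: "degree_dist f" and g: "degree_dist g"
    and balance: "(1 - \<beta>) * mean_deg f = \<beta> * mean_deg g"
    and kfmax_finite: "finite {k. f k \<noteq> 0}"
    and opt: "is_optimum \<beta> c f g (1/2) kstar"
    and Gam: "Gamma g (Lcut f kstar) = 1 - \<delta>"
    and delta: "\<delta> < 2 * c / (real kstar * phi g (Lcut f kstar) (1/2))"
  shows "\<exists>f' g'. degree_dist f' \<and> degree_dist g' \<and> fosd f' f \<and> fosd g' g
     \<and> (1 - \<beta>) * mean_deg f' = \<beta> * mean_deg g'
     \<and> (\<exists>p' k'. is_optimum \<beta> c f' g' p' k')
     \<and> (\<forall>p' k'. is_optimum \<beta> c f' g' p' k' \<longrightarrow>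
          profit \<beta> c f' g' p' k' > profit \<beta> c f g (1/2) kstar
          \<and> Gamma g' (Lcut f' k') < 1 - \<delta>)"
proof -
  note fd = dd_basic[OF f] and gd = dd_basic[OF g]
  define L0 where "L0 = Lcut f kstar"
  have L0: "0 \<le> L0" "L0 \<le> 1" using tail_bounds[OF f] by (auto simp: L0_def Lcut_def)
  define ph where "ph = phi g L0 (1/2)"
  have "0 \<le> (\<Sum>k. g k * (1 - L0) ^ k)" using dd_pow_sums(3)[OF g, of "1 - L0"] L0 by auto
  hence d0: "0 \<le> \<delta>" using Gam by (simp add: Gamma_def L0_def)
  have kph: "0 < real kstar * ph"
  proof (rule ccontr)
    assume "\<not> 0 < real kstar * ph"
    hence "2 * c / (real kstar * ph) \<le> 0" using cpos by (intro divide_nonneg_nonpos) auto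
    thus False using delta d0 by (simp add: ph_def L0_def)
  qed
  have L0p: "0 < L0"
  proof (rule ccontr)
    assume "\<not> 0 < L0"
    hence "L0 = 0" using L0 by simp
    hence "ph = 0" by (simp add: ph_def phi_def)
    thus False using kph by simp
  qed
  have "(\<Sum>k. g k * (1 - L0) ^ k) \<le> (\<Sum>k. g k * (1 - L0))"
  proof (rule suminf_le)
    fix k :: nat
    show "g k * (1 - L0) ^ k \<le> g k * (1 - L0)"
    proof (cases k)
      case 0 thus ?thesis using gd by simp
    next
      case (Suc j)
      hence "(1 - L0) ^ k \<le> (1 - L0) ^ 1" using L0 by (intro power_decreasing) auto
      thus ?thesis using gd(1)[of k] by (intro mult_left_mono) auto
    qed
  qed (use dd_pow_sums(1)[OF g, of "1 - L0"] L0 gd in \<open>auto simp: sums_iff intro!: summable_mult2\<close>)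
  also have "\<dots> = 1 - L0" using gd suminf_mult2[of g "1 - L0"] by (simp add: sums_iff)
  finally have "0 < 1 - \<delta>" using Gam L0p by (simp add: Gamma_def L0_def)
  define X where "X = 1 - \<delta>"
  have X: "0 < X" "X \<le> 1" using \<open>0 < 1 - \<delta>\<close> d0 by (auto simp: X_def)
  define q where "q = c / (real kstar * ph)"
  have q: "0 < q" using kph cpos by (simp add: q_def)
  define dd where "dd = q * X / 2"
  have dd: "0 < dd" using q X by (simp add: dd_def)
  define m where "m = min dd (X/2)"
  have m: "0 < m" "m \<le> dd" "m \<le> X/2" using dd X by (auto simp: m_def)
  define w where "w = X - m"
  have w: "X/2 \<le> w" "0 < w" "w \<le> 1 - m" "w < 1" using m X by (auto simp: w_def)
  have P0: "profit \<beta> c f g (1/2) kstar = 1 - \<beta> + \<beta> * ((1/2 - q) * (1/2) * X)"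
    unfolding profit_def q_def ph_def L0_def X_def Gam[symmetric] by simp
  obtain K0 where K0: "\<And>k. k \<in> {k. f k \<noteq> 0} \<Longrightarrow> k \<le> K0"
    using kfmax_finite unfolding finite_nat_set_iff_bounded_le by blast
  define K where "K = Suc K0"
  have K1: "1 \<le> K" by (simp add: K_def)
  have Kz: "f k = 0" if "K < k" for k
  proof (rule ccontr)
    assume "f k \<noteq> 0"
    hence "k \<le> K0" using K0 by simp
    thus False using that by (simp add: K_def)
  qed
  define s where "s = nat \<lceil>real K / (4 * c)\<rceil>"
  have "real K / (4 * c) \<le> real s" unfolding s_def by (rule real_nat_ceiling_ge)
  hence "real K \<le> 4 * c * real s" using cpos by (simp add: pos_divide_le_eq mult.commute)
  hence Ks: "real K < 4 * c * (real s + 1)" using cpos by (simp add: algebra_simps)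
  define mg where "mg = mean_deg g"
  have mg: "0 \<le> mg" using gd by (simp add: mg_def)
  define A0 where "A0 = \<beta> * (mg + (1 - w) * real s) / (1 - \<beta>)"
  define B where "B = \<beta> * w / (1 - \<beta>)"
  have A0: "0 \<le> A0" using beta mg w by (simp add: A0_def)
  have B: "0 < B" using beta w by (simp add: B_def)
  obtain t :: nat where t: "max 1 (max (2 * (A0 + B)) (8 * (A0 + B) * (mg + real s) / m)) < real t"
    using reals_Archimedean2 by blast
  have t1: "1 < real t" and t2: "2 * (A0 + B) < real t" and t3: "8 * (A0 + B) * (mg + real s) / m < real t"
    using t by auto
  obtain M :: nat where Mx: "max (real s) (max 1 (max (2 * real K) (max (2 * real K / B)
      (max (8 * real t / (m * B)) (16 * c / (m * m)))))) < real M"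
    using reals_Archimedean2 by blast
  have M1: "real s < real M" "1 < real M" "2 * real K < real M" "2 * real K / B < real M"
     "8 * real t / (m * B) < real M" "16 * c / (m * m) < real M" using Mx by auto
  define K2 where "K2 = M * t"
  have K2r: "real K2 = real M * real t" by (simp add: K2_def)
  have MK2: "real M \<le> real K2" using t1 K2r M1 by simp
  have KK2: "K < K2" using MK2 M1 K1 by linarith
  define N where "N = A0 + B * real M - real K"
  define D where "D = real K2 - real K"
  define e where "e = N / D"
  have BM: "2 * real K < B * real M" using M1(4) B by (simp add: pos_divide_less_eq mult.commute)
  have N1: "B * real M / 2 \<le> N" using BM A0 by (simp add: N_def)
  have "0 < B * real M" using B M1(2) by simp
  hence Np: "0 < N" using N1 by linarith
  have D1: "real M * real t / 2 \<le> D" using MK2 M1(3) K2r unfolding D_def by linarith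
  have D2: "D \<le> real M * real t" using K2r by (simp add: D_def)
  have Mt: "0 < real M * real t" using M1 t1 by simp
  have Dp: "0 < D" using D1 Mt by linarith
  have NM: "N \<le> (A0 + B) * real M"
  proof -
    have "A0 \<le> A0 * real M" using A0 M1(2) by (simp add: mult_le_cancel_left1)
    thus ?thesis by (simp add: N_def algebra_simps)
  qed
  have "e \<le> N / (real M * real t / 2)" unfolding e_def
    using Np D1 Mt by (intro divide_left_mono) auto
  also have "\<dots> \<le> (A0 + B) * real M / (real M * real t / 2)"
    using NM Mt by (intro divide_right_mono) auto
  also have "\<dots> = 2 * (A0 + B) / real t" using M1(2) t1 by (simp add: field_simps)
  finally have e_up: "e \<le> 2 * (A0 + B) / real t" .
  have "B / (2 * real t) = (B * real M / 2) / (real M * real t)" using M1(2) t1 by (simp add: field_simps)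
  also have "\<dots> \<le> N / (real M * real t)" using N1 Mt by (intro divide_right_mono) auto
  also have "\<dots> \<le> e" unfolding e_def using Np Dp D2 by (intro divide_left_mono) auto
  finally have e_low: "B / (2 * real t) \<le> e" .
  have ep: "0 < e" using Np Dp by (simp add: e_def)
  have "2 * (A0 + B) / real t < 1" using t2 t1 by (simp add: divide_less_eq)
  hence e1: "e < 1" using e_up by linarith
  have "8 * (A0 + B) * (mg + real s) < real t * m" using t3 m by (simp add: divide_less_eq mult.commute)
  hence "2 * (A0 + B) * (mg + real s) * 4 \<le> m * real t" by (simp add: algebra_simps)
  hence "2 * (A0 + B) * (mg + real s) / real t \<le> m / 4" using t1 by (simp add: divide_le_eq)
  moreover have "e * (mg + real s) \<le> 2 * (A0 + B) / real t * (mg + real s)"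
    using e_up mg by (intro mult_right_mono) auto
  ultimately have eS: "e * (mg + real s) \<le> m / 4" by simp
  have "8 * real t < real M * (m * B)" using M1(5) m B by (simp add: divide_less_eq)
  hence "4 / m \<le> B / (2 * real t) * real M" using m t1 by (simp add: field_simps)
  also have "\<dots> \<le> e * real M" using e_low by (intro mult_right_mono) auto
  finally have eM: "4 / m \<le> e * real M" .
  have "(1 - e) ^ M * (1 + real M * e) \<le> 1" using bern2[of e M] ep e1 by simp
  moreover have "(1 - e) ^ M * (e * real M) \<le> (1 - e) ^ M * (1 + real M * e)"
    using e1 by (intro mult_left_mono) auto
  ultimately have "(1 - e) ^ M * (e * real M) \<le> 1" by linarith
  hence "(1 - e) ^ M \<le> 1 / (e * real M)" using ep M1(2) by (simp add: le_divide_eq)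
  also have "\<dots> \<le> 1 / (4 / m)"
  proof (rule divide_left_mono)
    have "0 < 4 / m" using m by simp
    thus "0 < e * real M * (4 / m)" using eM ep M1(2) by (intro mult_pos_pos) auto
  qed (use eM in auto)
  finally have powM: "(1 - e) ^ M \<le> m / 4" by simp
  have sM: "s \<le> M" using M1(1) by simp
  define g' where "g' = gm w s M g"
  have w01: "0 \<le> w" "w \<le> 1" using w by auto
  note gp = gm_props[OF g w01 sM, folded g'_def]
  define f' where "f' = fp K K2 e"
  note fpp = fp_props[OF K1 KK2 ep e1, folded f'_def]
  define G where "G = (\<Sum>i. g i * (1 - e) ^ i)"
  have G01: "G \<le> 1" "0 \<le> G" using dd_pow_sums[OF g, of "1 - e"] ep e1 by (auto simp: G_def)
  have Gl: "1 - e * mg \<le> G" unfolding G_def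
  proof -
    have "(\<lambda>i. g i - e * (real i * g i)) sums (1 - e * mg)"
      using sums_diff[OF gd(3) sums_mult[OF gd(4), of e]] by (simp add: mg_def)
    moreover have "(\<lambda>i. g i - e * (real i * g i)) = (\<lambda>i. g i * (1 - real i * e))" by (auto simp: algebra_simps)
    ultimately have sl: "(\<lambda>i. g i * (1 - real i * e)) sums (1 - e * mg)" by simp
    have "(\<Sum>i. g i * (1 - real i * e)) \<le> (\<Sum>i. g i * (1 - e) ^ i)"
    proof (rule suminf_le)
      fix i show "g i * (1 - real i * e) \<le> g i * (1 - e) ^ i"
        using bern1[of e i] ep e1 gd(1)[of i] by (intro mult_left_mono) auto
    qed (use sl dd_pow_sums(1)[OF g, of "1 - e"] ep e1 in \<open>auto simp: sums_iff\<close>)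
    thus "1 - e * mg \<le> (\<Sum>i. g i * (1 - e) ^ i)" using sl by (simp add: sums_iff)
  qed
  have SG: "(\<lambda>k. g' k * (1 - e) ^ k) sums ((1 - w) * (1 - e) ^ s * G + w * (1 - e) ^ M * G)"
    using gp(3)[of "1 - e"] ep e1 by (simp add: G_def)
  define Gm where "Gm = Gamma g' e"
  have Gm_eq: "Gm = 1 - ((1 - w) * (1 - e) ^ s * G + w * (1 - e) ^ M * G)"
    using SG by (simp add: Gm_def Gamma_def sums_iff)
  have emg: "0 \<le> e * mg" using ep mg by simp
  define E where "E = e * (mg + real s)"
  have E0: "0 \<le> E" using ep mg by (simp add: E_def)
  have Esplit: "E = e * mg + real s * e" by (simp add: E_def algebra_simps)
  have Em: "E \<le> m / 4" using eS by (simp add: E_def)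
  have se: "real s * e \<le> m / 4" using Em Esplit emg by linarith
  have ps: "1 - real s * e \<le> (1 - e) ^ s" using bern1[of e s] ep e1 by simp
  have se1: "0 \<le> 1 - real s * e" using se m X by linarith
  have "0 \<le> real s * e" using ep by simp
  hence emg1: "0 \<le> 1 - e * mg" using Esplit Em m X by linarith
  have a1: "(1 - real s * e) * (1 - e * mg) \<le> (1 - e) ^ s * G"
    using ps Gl se1 emg1 by (intro mult_mono) auto
  have "0 \<le> (real s * e) * (e * mg)" using emg ep by simp
  hence a2: "1 - E \<le> (1 - real s * e) * (1 - e * mg)" unfolding Esplit by (simp add: algebra_simps)
  have a3: "(1 - w) * (1 - E) \<le> (1 - w) * ((1 - e) ^ s * G)"
    using a1 a2 w by (intro mult_left_mono) auto
  have a4: "0 \<le> w * (1 - e) ^ M * G" using w G01 e1 by simp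
  have "(1 - w) * E \<le> E" using w E0 by (intro mult_left_le_one_le) auto
  moreover have "(1 - w) * (1 - E) = (1 - w) - (1 - w) * E" by (simp add: algebra_simps)
  ultimately have a5: "(1 - w) - E \<le> (1 - w) * ((1 - e) ^ s * G)" using a3 by linarith
  have P_eq: "(1 - w) * (1 - e) ^ s * G = (1 - w) * ((1 - e) ^ s * G)" by (simp add: mult.assoc)
  have Gm_up: "Gm \<le> w + m / 4" using a5 a4 Em unfolding Gm_eq P_eq by linarith
  have b1: "(1 - w) * (1 - e) ^ s * G \<le> (1 - w)"
  proof -
    have "(1 - e) ^ s * G \<le> 1 * 1" using G01 e1 ep by (intro mult_mono power_le_one) auto
    hence "(1 - w) * ((1 - e) ^ s * G) \<le> (1 - w) * 1" using w by (intro mult_left_mono) auto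
    thus ?thesis by (simp add: mult.assoc)
  qed
  have b2: "w * (1 - e) ^ M * G \<le> (1 - e) ^ M"
  proof -
    have "w * G \<le> 1 * 1" using G01 w by (intro mult_mono) auto
    hence "(1 - e) ^ M * (w * G) \<le> (1 - e) ^ M * 1" using e1 by (intro mult_left_mono) auto
    thus ?thesis by (simp add: algebra_simps)
  qed
  have Gm_low: "w - m / 4 \<le> Gm" using b1 b2 powM unfolding Gm_eq by linarith
  have "0 \<le> (1 - w) * ((1 - e) ^ s * G)" using w G01 e1 by simp
  hence Gm1: "Gm \<le> 1" using a4 unfolding Gm_eq P_eq by linarith
  define S where "S = Sf g' e"
  have "1 - Gm \<le> S" using Sf_lower[OF gp(1) ep e1] SG Gm_eq by (simp add: S_def sums_iff)
  hence S34: "3 * m / 4 \<le> S" using Gm_up w by linarith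
  have Sp: "0 < S" using S34 m by linarith
  have Gmp: "0 < Gm" using Gm_low w m by linarith
  have GmX: "Gm < X" using Gm_up w_def m by linarith
  define C where "C = c / (real K2 * S)"
  have "16 * c < real M * (m * m)" using M1(6) m by (simp add: divide_less_eq)
  hence "12 * c / m < real M * (3 * m / 4)" using m by (simp add: field_simps)
  also have "\<dots> \<le> real K2 * S" using MK2 S34 m by (intro mult_mono) auto
  finally have KS: "12 * c / m < real K2 * S" .
  have p12: "0 < 12 * c / m" using cpos m by simp
  have "C \<le> c / (12 * c / m)" unfolding C_def
    using KS cpos p12 Sp KK2 by (intro divide_left_mono mult_pos_pos) auto
  also have "\<dots> = m / 12" using cpos m by (simp add: field_simps)
  finally have Cm: "C \<le> m / 12" .
  have C0: "0 \<le> C" using cpos Sp by (simp add: C_def)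
  have Lf: "Lcut f' kc = (if kc \<le> K then 1 else if kc \<le> K2 then e else 0)" for kc
    using fpp(3)[of kc] KK2 by (auto simp: Lcut_def)
  have LK2: "Lcut f' K2 = e" using Lf[of K2] KK2 by simp
  have T2eq: "profit \<beta> c f' g' (1/2) K2 = 1 - \<beta> + \<beta> * Gm * (1/4 - C)"
    using regime2(2)[OF LK2 LK2 _ order.refl _ _ _ _ beta(1) cpos, of "1/2"] KK2 K1 Gmp Sp
    by (simp add: Gm_def S_def C_def)
  have "0 < 1/4 - C" using Cm m X by linarith
  hence "0 < \<beta> * Gm * (1/4 - C)" using beta Gmp by simp
  hence T2b: "1 - \<beta> < profit \<beta> c f' g' (1/2) K2" using T2eq by linarith
  have "Gm * C \<le> C" using Gm1 C0 Gmp by (intro mult_left_le_one_le) auto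
  moreover have "Gm * (1/4 - C) = Gm / 4 - Gm * C" by (simp add: algebra_simps)
  moreover have "(1/2 - q) * (1/2) * X = X / 4 - dd" by (simp add: dd_def algebra_simps)
  ultimately have "(1/2 - q) * (1/2) * X < Gm * (1/4 - C)"
    using Gm_low Cm m w_def by linarith
  hence "\<beta> * ((1/2 - q) * (1/2) * X) < \<beta> * (Gm * (1/4 - C))" using beta by (intro mult_strict_left_mono)
  hence T2P: "profit \<beta> c f g (1/2) kstar < profit \<beta> c f' g' (1/2) K2"
    unfolding P0 T2eq by (simp add: mult.assoc)
  have reg1: "profit \<beta> c f' g' p kc < 1 - \<beta>" if "0 < p" "p < 1" "1 \<le> kc" "kc \<le> K" for p kc
    using regime1[OF gp(1) gp(5) Ks that(3,4) _ that(1,2) beta(1) cpos] Lf[of kc] that by simp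
  have reg3: "profit \<beta> c f' g' p kc = 1 - \<beta>" if "0 < p" "p < 1" "K2 < kc" for p kc
    using regime3[OF gp(1) _ that(1,2)] Lf[of kc] that KK2 by simp
  have reg2: "profit \<beta> c f' g' p kc \<le> profit \<beta> c f' g' (1/2) K2"
    if "0 < p" "p < 1" "K < kc" "kc \<le> K2" for p kc
  proof -
    have Lkc: "Lcut f' kc = e" using Lf[of kc] that by simp
    have "1 \<le> kc" using that K1 by simp
    from regime2(1)[OF Lkc LK2 this that(4) that(1,2) _ _ beta(1) cpos] Gmp Sp
    show ?thesis by (simp add: Gm_def S_def)
  qed
  have opt2: "is_optimum \<beta> c f' g' (1/2) K2"
    unfolding is_optimum_def
  proof (intro conjI allI impI)
    fix p' :: real and kc' :: nat assume a: "0 < p' \<and> p' < 1 \<and> 1 \<le> kc'"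
    show "profit \<beta> c f' g' p' kc' \<le> profit \<beta> c f' g' (1/2) K2"
    proof (cases "kc' \<le> K")
      case True thus ?thesis using reg1[of p' kc'] a T2b by linarith
    next
      case False
      show ?thesis
      proof (cases "kc' \<le> K2")
        case True thus ?thesis using reg2[of p' kc'] a False by simp
      next
        case False2: False
        thus ?thesis using reg3[of p' kc'] a T2b by simp
      qed
    qed
  qed (use KK2 in auto)
  have allopt: "profit \<beta> c f' g' p' k' > profit \<beta> c f g (1/2) kstar \<and> Gamma g' (Lcut f' k') < 1 - \<delta>"
    if o: "is_optimum \<beta> c f' g' p' k'" for p' :: real and k' :: nat
  proof -
    have o1: "0 < p'" "p' < 1" "1 \<le> k'" using o by (auto simp: is_optimum_def)
    have o2: "profit \<beta> c f' g' (1/2) K2 \<le> profit \<beta> c f' g' p' k'"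
      using o KK2 by (auto simp: is_optimum_def)
    have "K < k'"
    proof (rule ccontr)
      assume "\<not> K < k'"
      thus False using reg1[of p' k'] o1 o2 T2b by simp
    qed
    moreover have "k' \<le> K2"
    proof (rule ccontr)
      assume "\<not> k' \<le> K2"
      thus False using reg3[of p' k'] o1 o2 T2b by simp
    qed
    ultimately have "Lcut f' k' = e" using Lf[of k'] by simp
    thus ?thesis using o2 T2P GmX by (simp add: Gm_def X_def)
  qed
  have bal: "(1 - \<beta>) * mean_deg f' = \<beta> * mean_deg g'"
  proof -
    have "mean_deg f' = real K + e * D" using fpp(2) by (simp add: D_def algebra_simps)
    also have "e * D = N" using Dp by (simp add: e_def)
    finally have "mean_deg f' = A0 + B * real M" by (simp add: N_def)
    moreover have "A0 + B * real M = (\<beta> * (mg + (1 - w) * real s + w * real M)) / (1 - \<beta>)"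
      unfolding A0_def B_def by (simp add: add_divide_distrib[symmetric] diff_divide_distrib[symmetric] algebra_simps)
    ultimately have "(1 - \<beta>) * mean_deg f' = \<beta> * (mg + (1 - w) * real s + w * real M)"
      using beta by simp
    moreover have "mean_deg g' = mg + (1 - w) * real s + w * real M" using gp(2) by (simp add: mg_def)
    ultimately show ?thesis by (simp only:)
  qed
  show ?thesis
    apply (rule exI[of _ f'], rule exI[of _ g'])
    using fpp(1) gp(1) fosd_fp[OF f Kz K1 KK2 ep e1, folded f'_def] gp(4) bal opt2 allopt
    by (auto simp: fosd_def)
qed

end
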